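(* For each $\mathfrak{t}\in\{\widetilde{\mathrm{I}},\mathrm{II},\mathrm{III},\widetilde{\mathrm{IV}}\}$, the stuffle product $*_{\mathfrak{t}}$ on $\mathfrak{A}^1_{\mathfrak{t}}$ is commutative and associative.
   Context: All algebras are over $\mathbb{Q}$; words are concatenation products of letters, $\mathbf{1}$ is the empty word. For a free algebra on a set of letters equipped with a commutative bilinear product $[\cdot,\cdot]$ on the span of the letters, the associated stuffle product $*$ is the bilinear product with $\mathbf{1}*u=u*\mathbf{1}=u$ and $(\alpha u)*(\beta v)=\alpha(u*\beta v)+\beta(\alpha u*v)+[\alpha,\beta](u*v)$ for letters $\alpha,\beta$ and words $u,v$. Type $\widetilde{\mathrm{I}}$: $\mathfrak{A}^1_{\widetilde{\mathrm{I}}}$ is the free algebra on letters $\theta$ and $z_k$ ($k\ge1$), with $[z_k,z_l]=z_{k+l}+z_{k+l-1}$, $[\theta,z_k]=[z_k,\theta]=z_{k+1}$, $[\theta,\theta]=z_2-\theta$; $*_{\widetilde{\mathrm{I}}}$ is the associated stuffle. Type II: $\mathfrak{A}^1_{\mathrm{II}}$ is the free algebra on letters $z'_k$ ($k\ge0$), with $[z'_k,z'_l]=z'_{k+l}$; $*_{\mathrm{II}}$ is the associated stuffle. Type III: let $B$ be the free algebra on letters $z_k$ ($k\in\mathbb{Z}$) with stuffle $*_B$ given by $[z_k,z_l]=z_{k+l}$. Let $\mathfrak{A}^1_{\mathrm{III}}$ be the $\mathbb{Q}$-span of the symbols $z'_kw$ ($k\in\mathbb{Z}$, $w$ a word in $B$).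 Set $\sigma_-(z'_nw):=z_nw-z_{n-1}w\in B$, and define bilinearly $z'_ku*_{\mathrm{III}}z'_lv:=z'_k\big(u*_B\sigma_-(z'_lv)\big)+z'_l\big(\sigma_-(z'_ku)*_Bv\big)+(z'_{k+l}-z'_{k+l-1})(u*_Bv)$. Type $\widetilde{\mathrm{IV}}$: let $C$ be the free algebra on letters $z'_k$ ($k\ge0$) with stuffle $*_C$ given by $[z'_k,z'_l]=z'_{k+l}$. Let $\mathfrak{A}^1_{\widetilde{\mathrm{IV}}}:=\mathbb{Q}\mathbf{1}\oplus\theta C\oplus\bigoplus_{k\ge1}z_kC$ (with new first-position symbols $\theta,z_k$). Put $\sigma_+(z_nw):=z'_nw+z'_{n-1}w\in C$. Define $*_{\widetilde{\mathrm{IV}}}$ bilinearly with unit $\mathbf{1}$ and, for $k,l\ge1$ and words $u,v\in C$: $z_ku*z_lv=z_k\big(u*_C\sigma_+(z_lv)\big)+z_l\big(\sigma_+(z_ku)*_Cv\big)+(z_{k+l}+z_{k+l-1})(u*_Cv)$; $z_ku*\theta v=\theta v*z_ku=z_k\big(u*_Cz'_1v\big)+\theta\big(\sigma_+(z_ku)*_Cv\big)+z_{k+1}(u*_Cv)$; $\theta u*\theta v=\theta\big(u*_Cz'_1v\big)+\theta\big(z'_1u*_Cv\big)+(z_2-\theta)(u*_Cv)$. *)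

theory Defs
  imports Complex_Main
begin

text \<open>A Q-linear combination of basis elements of type 'b is a function 'b => rat;
  elements of the algebra are those with finite support (contained in the set of
  admissible basis elements).\<close>

definition supp :: "('b \<Rightarrow> rat) \<Rightarrow> 'b set" where
  "supp f = {x. f x \<noteq> 0}"

definition elt :: "'b set \<Rightarrow> ('b \<Rightarrow> rat) \<Rightarrow> bool" where
  "elt V f \<longleftrightarrow> finite (supp f) \<and> supp f \<subseteq> V"

definition delta :: "'b \<Rightarrow> 'b \<Rightarrow> rat" where
  "delta a = (\<lambda>x. if x = a then 1 else 0)"

definition ladd :: "('b \<Rightarrow> rat) \<Rightarrow> ('b \<Rightarrow> rat) \<Rightarrow> 'b \<Rightarrow> rat" where
  "ladd f g = (\<lambda>x. f x + g x)"

definition lsub :: "('b \<Rightarrow> rat) \<Rightarrow> ('b \<Rightarrow> rat) \<Rightarrow> 'b \<Rightarrow> rat" where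
  "lsub f g = (\<lambda>x. f x - g x)"

definition lext :: "('a \<Rightarrow> 'b \<Rightarrow> rat) \<Rightarrow> ('a \<Rightarrow> rat) \<Rightarrow> 'b \<Rightarrow> rat" where
  "lext T f = (\<lambda>y. \<Sum>x\<in>supp f. f x * T x y)"

definition bext :: "('a \<Rightarrow> 'b \<Rightarrow> 'c \<Rightarrow> rat) \<Rightarrow> ('a \<Rightarrow> rat) \<Rightarrow> ('b \<Rightarrow> rat) \<Rightarrow> 'c \<Rightarrow> rat" where
  "bext M f g = (\<lambda>z. \<Sum>x\<in>supp f. \<Sum>y\<in>supp g. f x * g y * M x y z)"

text \<open>Left concatenation by a letter, extended linearly: a (sum c_w w) = sum c_w (a w).\<close>
definition pre :: "'a \<Rightarrow> ('a list \<Rightarrow> rat) \<Rightarrow> 'a list \<Rightarrow> rat" where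
  "pre a f = (\<lambda>w. case w of [] \<Rightarrow> 0 | x # w' \<Rightarrow> if x = a then f w' else 0)"

text \<open>br a b is the linear combination of letters [a,b].\<close>
fun stuffle :: "('a \<Rightarrow> 'a \<Rightarrow> 'a \<Rightarrow> rat) \<Rightarrow> 'a list \<Rightarrow> 'a list \<Rightarrow> 'a list \<Rightarrow> rat" where
  "stuffle br [] v = delta v"
| "stuffle br (a # u) [] = delta (a # u)"
| "stuffle br (a # u) (b # v) =
     ladd (ladd (pre a (stuffle br u (b # v))) (pre b (stuffle br (a # u) v)))
          (let s = stuffle br u v in lext (\<lambda>c. pre c s) (br a b))"

definition comm_on :: "'b set \<Rightarrow> (('b \<Rightarrow> rat) \<Rightarrow> ('b \<Rightarrow> rat) \<Rightarrow> 'b \<Rightarrow> rat) \<Rightarrow> bool" where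
  "comm_on V m \<longleftrightarrow> (\<forall>f g. elt V f \<and> elt V g \<longrightarrow> m f g = m g f)"

definition assoc_on :: "'b set \<Rightarrow> (('b \<Rightarrow> rat) \<Rightarrow> ('b \<Rightarrow> rat) \<Rightarrow> 'b \<Rightarrow> rat) \<Rightarrow> bool" where
  "assoc_on V m \<longleftrightarrow> (\<forall>f g h. elt V f \<and> elt V g \<and> elt V h \<longrightarrow> m (m f g) h = m f (m g h))"

datatype letI = Th | Zl nat

fun brI :: "letI \<Rightarrow> letI \<Rightarrow> letI \<Rightarrow> rat" where
  "brI (Zl k) (Zl l) = ladd (delta (Zl (k + l))) (delta (Zl (k + l - 1)))"
| "brI Th (Zl k) = delta (Zl (k + 1))"
| "brI (Zl k) Th = delta (Zl (k + 1))"
| "brI Th Th = lsub (delta (Zl 2)) (delta Th)"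

definition WI :: "letI list set" where
  "WI = {w. \<forall>a\<in>set w. a = Th \<or> (\<exists>k\<ge>1. a = Zl k)}"

definition mulI :: "(letI list \<Rightarrow> rat) \<Rightarrow> (letI list \<Rightarrow> rat) \<Rightarrow> letI list \<Rightarrow> rat" where
  "mulI = bext (stuffle brI)"

text \<open>Letter z'_k (k >= 0) is represented by the natural number k.\<close>
definition brII :: "nat \<Rightarrow> nat \<Rightarrow> nat \<Rightarrow> rat" where
  "brII k l = delta (k + l)"

definition mulII :: "(nat list \<Rightarrow> rat) \<Rightarrow> (nat list \<Rightarrow> rat) \<Rightarrow> nat list \<Rightarrow> rat" where
  "mulII = bext (stuffle brII)"

text \<open>B: letters z_k (k in Z) represented by integers.\<close>
definition brB :: "int \<Rightarrow> int \<Rightarrow> int \<Rightarrow> rat" where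
  "brB k l = delta (k + l)"

abbreviation stB :: "int list \<Rightarrow> int list \<Rightarrow> int list \<Rightarrow> rat" where
  "stB \<equiv> stuffle brB"

text \<open>The symbol z'_k w is represented by the pair (k, w).\<close>
definition sigma_minus :: "int \<Rightarrow> int list \<Rightarrow> int list \<Rightarrow> rat" where
  "sigma_minus n w = lsub (delta (n # w)) (delta ((n - 1) # w))"

definition pz :: "int \<Rightarrow> (int list \<Rightarrow> rat) \<Rightarrow> int \<times> int list \<Rightarrow> rat" where
  "pz k F = (\<lambda>(j, w). if j = k then F w else 0)"

fun mIII :: "int \<times> int list \<Rightarrow> int \<times> int list \<Rightarrow> int \<times> int list \<Rightarrow> rat" where
  "mIII (k, u) (l, v) =
     ladd (ladd (pz k (bext stB (delta u) (sigma_minus l v)))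
                (pz l (bext stB (sigma_minus k u) (delta v))))
          (lsub (pz (k + l) (stB u v)) (pz (k + l - 1) (stB u v)))"

definition mulIII :: "(int \<times> int list \<Rightarrow> rat) \<Rightarrow> (int \<times> int list \<Rightarrow> rat) \<Rightarrow> int \<times> int list \<Rightarrow> rat" where
  "mulIII = bext mIII"

text \<open>C: letters z'_k (k >= 0) represented by naturals, with stuffle stC = stuffle brII.
  Basis of A^1_IV: One (the unit 1), ThW w (= theta w), ZW k w (= z_k w, k >= 1), w a word in C.\<close>
datatype bIV = One | ThW "nat list" | ZW nat "nat list"

abbreviation stC :: "nat list \<Rightarrow> nat list \<Rightarrow> nat list \<Rightarrow> rat" where
  "stC \<equiv> stuffle brII"

definition VIV :: "bIV set" where
  "VIV = {One} \<union> range ThW \<union> {ZW k w | k w. k \<ge> 1}"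

definition sigma_plus :: "nat \<Rightarrow> nat list \<Rightarrow> nat list \<Rightarrow> rat" where
  "sigma_plus n w = ladd (delta (n # w)) (delta ((n - 1) # w))"

definition pT :: "(nat list \<Rightarrow> rat) \<Rightarrow> bIV \<Rightarrow> rat" where
  "pT F = (\<lambda>x. case x of ThW w \<Rightarrow> F w | _ \<Rightarrow> 0)"

definition pZ :: "nat \<Rightarrow> (nat list \<Rightarrow> rat) \<Rightarrow> bIV \<Rightarrow> rat" where
  "pZ k F = (\<lambda>x. case x of ZW j w \<Rightarrow> (if j = k then F w else 0) | _ \<Rightarrow> 0)"

fun mIV :: "bIV \<Rightarrow> bIV \<Rightarrow> bIV \<Rightarrow> rat" where
  "mIV One y = delta y"
| "mIV x One = delta x"
| "mIV (ZW k u) (ZW l v) =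
     ladd (ladd (pZ k (bext stC (delta u) (sigma_plus l v)))
                (pZ l (bext stC (sigma_plus k u) (delta v))))
          (ladd (pZ (k + l) (stC u v)) (pZ (k + l - 1) (stC u v)))"
| "mIV (ZW k u) (ThW v) =
     ladd (ladd (pZ k (stC u (1 # v))) (pT (bext stC (sigma_plus k u) (delta v))))
          (pZ (k + 1) (stC u v))"
| "mIV (ThW v) (ZW k u) =
     ladd (ladd (pZ k (stC u (1 # v))) (pT (bext stC (sigma_plus k u) (delta v))))
          (pZ (k + 1) (stC u v))"
| "mIV (ThW u) (ThW v) =
     ladd (ladd (pT (stC u (1 # v))) (pT (stC (1 # u) v)))
          (lsub (pZ 2 (stC u v)) (pT (stC u v)))"

definition mulIV :: "(bIV \<Rightarrow> rat) \<Rightarrow> (bIV \<Rightarrow> rat) \<Rightarrow> bIV \<Rightarrow> rat" where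
  "mulIV = bext mIV"

end

theory Submission
  imports Defs "HOL-Library.Function_Algebras"
begin


definition fin :: "('b \<Rightarrow> rat) \<Rightarrow> bool" where "fin f \<longleftrightarrow> finite (supp f)"

lemma ladd_eq[simp]: "ladd f g = f + g" by (simp add: ladd_def fun_eq_iff)
lemma lsub_eq[simp]: "lsub f g = f - g" by (simp add: lsub_def fun_eq_iff)

lemma supp_delta[simp]: "supp (delta a) = {a}" by (auto simp: supp_def delta_def)
lemma fin_delta[simp]: "fin (delta a)" by (simp add: fin_def)
lemma supp_zero[simp]: "supp 0 = {}" by (simp add: supp_def)
lemma fin_zero[simp]: "fin 0" by (simp add: fin_def)
lemma supp_add: "supp (f + g) \<subseteq> supp f \<union> supp g" by (auto simp: supp_def)
lemma supp_diff: "supp (f - g) \<subseteq> supp f \<union> supp g" by (auto simp: supp_def)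
lemma supp_uminus[simp]: "supp (- f) = supp f" by (auto simp: supp_def)
lemma fin_add[simp]: "fin f \<Longrightarrow> fin g \<Longrightarrow> fin (f + g)"
  unfolding fin_def by (meson finite_UnI finite_subset supp_add)
lemma fin_diff[simp]: "fin f \<Longrightarrow> fin g \<Longrightarrow> fin (f - g)"
  unfolding fin_def by (meson finite_UnI finite_subset supp_diff)
lemma fin_uminus[simp]: "fin (- f) = fin f" by (simp add: fin_def)

lemma lext_superset: "finite A \<Longrightarrow> supp f \<subseteq> A \<Longrightarrow> lext K f y = (\<Sum>x\<in>A. f x * K x y)"
  unfolding lext_def by (rule sum.mono_neutral_left) (auto simp: supp_def)

lemma lext_delta[simp]: "lext K (delta x) = K x"
  by (rule ext) (simp add: lext_def, simp add: delta_def)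

lemma lext_zero[simp]: "lext K 0 = 0"
  by (simp add: lext_def fun_eq_iff)

lemma lext_add: "fin f \<Longrightarrow> fin g \<Longrightarrow> lext K (f + g) = lext K f + lext K g"
proof (rule ext)
  fix y assume f: "fin f" and g: "fin g"
  let ?A = "supp f \<union> supp g"
  have fA: "finite ?A" using f g by (simp add: fin_def)
  have "lext K (f + g) y = (\<Sum>x\<in>?A. (f + g) x * K x y)"
    by (rule lext_superset[OF fA]) (rule supp_add)
  moreover have "lext K f y = (\<Sum>x\<in>?A. f x * K x y)" by (rule lext_superset[OF fA]) auto
  moreover have "lext K g y = (\<Sum>x\<in>?A. g x * K x y)" by (rule lext_superset[OF fA]) auto
  ultimately show "lext K (f + g) y = (lext K f + lext K g) y"
    by (simp add: sum.distrib distrib_right)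
qed

lemma lext_diff: "fin f \<Longrightarrow> fin g \<Longrightarrow> lext K (f - g) = lext K f - lext K g"
proof (rule ext)
  fix y assume f: "fin f" and g: "fin g"
  let ?A = "supp f \<union> supp g"
  have fA: "finite ?A" using f g by (simp add: fin_def)
  have "lext K (f - g) y = (\<Sum>x\<in>?A. (f - g) x * K x y)"
    by (rule lext_superset[OF fA]) (rule supp_diff)
  moreover have "lext K f y = (\<Sum>x\<in>?A. f x * K x y)" by (rule lext_superset[OF fA]) auto
  moreover have "lext K g y = (\<Sum>x\<in>?A. g x * K x y)" by (rule lext_superset[OF fA]) auto
  ultimately show "lext K (f - g) y = (lext K f - lext K g) y"
    by (simp add: sum_subtractf left_diff_distrib)
qed

lemma lext_kadd: "lext (\<lambda>x. K1 x + K2 x) f = lext K1 f + lext K2 f"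
  by (simp add: lext_def fun_eq_iff sum.distrib distrib_left)

lemma lext_kdiff: "lext (\<lambda>x. K1 x - K2 x) f = lext K1 f - lext K2 f"
  by (simp add: lext_def fun_eq_iff sum_subtractf right_diff_distrib)

lemma lext_kzero: "lext (\<lambda>x. 0) f = 0"
  by (simp add: lext_def fun_eq_iff)

lemma lext_cong: "(\<And>x. x \<in> supp f \<Longrightarrow> K1 x = K2 x) \<Longrightarrow> lext K1 f = lext K2 f"
  by (simp add: lext_def fun_eq_iff)

lemma lext_id: "fin f \<Longrightarrow> lext delta f = f"
proof (rule ext)
  fix y assume f: "fin f"
  have fA: "finite (insert y (supp f))" using f by (simp add: fin_def)
  have "lext delta f y = (\<Sum>x\<in>insert y (supp f). f x * delta x y)"
    by (rule lext_superset[OF fA]) auto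
  also have "\<dots> = (\<Sum>x\<in>insert y (supp f). if x = y then f x else 0)"
    by (rule sum.cong) (auto simp: delta_def)
  also have "\<dots> = f y" using fA by (simp add: sum.delta')
  finally show "lext delta f y = f y" .
qed

lemma supp_lext: "supp (lext K f) \<subseteq> (\<Union>x\<in>supp f. supp (K x))"
proof
  fix y assume "y \<in> supp (lext K f)"
  hence "(\<Sum>x\<in>supp f. f x * K x y) \<noteq> 0" by (simp add: supp_def lext_def)
  then obtain x where "x \<in> supp f" "f x * K x y \<noteq> 0" by (rule sum.not_neutral_contains_not_neutral)
  thus "y \<in> (\<Union>x\<in>supp f. supp (K x))" by (auto simp: supp_def)
qed

lemma fin_lext: "fin f \<Longrightarrow> (\<And>x. x \<in> supp f \<Longrightarrow> fin (K x)) \<Longrightarrow> fin (lext K f)"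
proof -
  assume f: "fin f" and K: "\<And>x. x \<in> supp f \<Longrightarrow> fin (K x)"
  have "finite (\<Union>x\<in>supp f. supp (K x))" using f K by (auto simp: fin_def)
  thus ?thesis unfolding fin_def by (rule finite_subset[OF supp_lext])
qed

lemma lext_swap: "lext (\<lambda>z. lext (\<lambda>x. K x z) f) h = lext (\<lambda>x. lext (K x) h) f"
  unfolding lext_def fun_eq_iff
  by (simp add: sum_distrib_left mult_ac, subst sum.swap, simp)

lemma lext_comp:
  assumes f: "fin f" and K: "\<And>x. x \<in> supp f \<Longrightarrow> fin (K1 x)"
  shows "lext K2 (lext K1 f) = lext (\<lambda>x. lext K2 (K1 x)) f"
proof (rule ext)
  fix y
  let ?B = "\<Union>x\<in>supp f. supp (K1 x)"
  have fB: "finite ?B" using f K by (auto simp: fin_def)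
  have "lext K2 (lext K1 f) y = (\<Sum>z\<in>?B. lext K1 f z * K2 z y)"
    by (rule lext_superset[OF fB supp_lext])
  also have "\<dots> = (\<Sum>z\<in>?B. \<Sum>x\<in>supp f. f x * K1 x z * K2 z y)"
    by (simp add: lext_def sum_distrib_right)
  also have "\<dots> = (\<Sum>x\<in>supp f. \<Sum>z\<in>?B. f x * K1 x z * K2 z y)"
    by (rule sum.swap)
  also have "\<dots> = (\<Sum>x\<in>supp f. f x * lext K2 (K1 x) y)"
  proof (rule sum.cong[OF refl])
    fix x assume x: "x \<in> supp f"
    have "lext K2 (K1 x) y = (\<Sum>z\<in>?B. K1 x z * K2 z y)"
      by (rule lext_superset[OF fB]) (use x in auto)
    thus "(\<Sum>z\<in>?B. f x * K1 x z * K2 z y) = f x * lext K2 (K1 x) y"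
      by (simp add: sum_distrib_left mult_ac)
  qed
  finally show "lext K2 (lext K1 f) y = lext (\<lambda>x. lext K2 (K1 x)) f y"
    by (simp add: lext_def)
qed

lemma pre_lext: "pre a (lext K f) = lext (\<lambda>x. pre a (K x)) f"
  by (auto simp: pre_def lext_def fun_eq_iff split: list.split)

lemma pre_add[simp]: "pre a (f + g) = pre a f + pre a g"
  by (auto simp: pre_def fun_eq_iff split: list.split)
lemma pre_diff[simp]: "pre a (f - g) = pre a f - pre a g"
  by (auto simp: pre_def fun_eq_iff split: list.split)
lemma pre_zero[simp]: "pre a 0 = 0"
  by (auto simp: pre_def fun_eq_iff split: list.split)
lemma pre_delta[simp]: "pre a (delta w) = delta (a # w)"
  by (auto simp: pre_def delta_def fun_eq_iff split: list.split)

lemma supp_pre: "supp (pre a F) \<subseteq> (\<lambda>w. a # w) ` supp F"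
proof
  fix y assume "y \<in> supp (pre a F)"
  then obtain w where "y = a # w" "F w \<noteq> 0"
    by (cases y) (auto simp: supp_def pre_def split: if_splits)
  thus "y \<in> (\<lambda>w. a # w) ` supp F" by (auto simp: supp_def)
qed
lemma fin_pre[simp]: "fin F \<Longrightarrow> fin (pre a F)"
  unfolding fin_def by (meson finite_imageI finite_subset supp_pre)

lemma pre_as_lext: "fin F \<Longrightarrow> pre a F = lext (\<lambda>w. delta (a # w)) F"
proof -
  assume F: "fin F"
  have "pre a F = pre a (lext delta F)" using lext_id[OF F] by simp
  also have "\<dots> = lext (\<lambda>w. delta (a # w)) F" by (simp add: pre_lext)
  finally show ?thesis .
qed

lemma bext_lext: "bext M f g = lext (\<lambda>x. lext (M x) g) f"
  by (simp add: bext_def lext_def fun_eq_iff sum_distrib_left mult_ac)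

lemma bext_comm:
  assumes "\<And>x y. x \<in> supp f \<Longrightarrow> y \<in> supp g \<Longrightarrow> M x y = M y x"
  shows "bext M f g = bext M g f"
  unfolding bext_def fun_eq_iff
proof
  fix z
  have "(\<Sum>x\<in>supp f. \<Sum>y\<in>supp g. f x * g y * M x y z) = (\<Sum>x\<in>supp f. \<Sum>y\<in>supp g. g y * f x * M y x z)"
  proof (intro sum.cong refl)
    fix x y assume "x \<in> supp f" "y \<in> supp g"
    thus "f x * g y * M x y z = g y * f x * M y x z" using assms[of x y] by (simp add: mult_ac)
  qed
  also have "\<dots> = (\<Sum>y\<in>supp g. \<Sum>x\<in>supp f. g y * f x * M y x z)" by (rule sum.swap)
  finally show "(\<Sum>x\<in>supp f. \<Sum>y\<in>supp g. f x * g y * M x y z) = (\<Sum>x\<in>supp g. \<Sum>y\<in>supp f. g x * f y * M x y z)" .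
qed



lemma bext_delta_delta[simp]: "bext M (delta x) (delta y) = M x y"
  by (simp add: bext_lext)
lemma bext_right_delta: "bext M F (delta z) = lext (\<lambda>p. M p z) F"
  by (simp add: bext_lext)
lemma bext_left_delta: "bext M (delta x) G = lext (M x) G"
  by (simp add: bext_lext)

lemma bext_add_left: "fin f1 \<Longrightarrow> fin f2 \<Longrightarrow> bext M (f1 + f2) g = bext M f1 g + bext M f2 g"
  by (simp add: bext_lext lext_add)
lemma bext_diff_left: "fin f1 \<Longrightarrow> fin f2 \<Longrightarrow> bext M (f1 - f2) g = bext M f1 g - bext M f2 g"
  by (simp add: bext_lext lext_diff)
lemma bext_add_right: "fin g1 \<Longrightarrow> fin g2 \<Longrightarrow> bext M f (g1 + g2) = bext M f g1 + bext M f g2"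
  by (simp add: bext_lext lext_add lext_kadd)
lemma bext_diff_right: "fin g1 \<Longrightarrow> fin g2 \<Longrightarrow> bext M f (g1 - g2) = bext M f g1 - bext M f g2"
  by (simp add: bext_lext lext_diff lext_kdiff)

lemma fin_bext:
  assumes "fin f" "fin g" "\<And>x y. x \<in> supp f \<Longrightarrow> y \<in> supp g \<Longrightarrow> fin (M x y)"
  shows "fin (bext M f g)"
  unfolding bext_lext
proof (rule fin_lext[OF assms(1)])
  fix x assume "x \<in> supp f"
  thus "fin (lext (M x) g)" using assms(2,3) by (intro fin_lext) auto
qed

lemma supp_bext:
  "supp (bext M f g) \<subseteq> (\<Union>x\<in>supp f. \<Union>y\<in>supp g. supp (M x y))"
  unfolding bext_lext
proof (rule subset_trans[OF supp_lext], rule UN_mono[OF subset_refl])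
  fix x show "supp (lext (M x) g) \<subseteq> (\<Union>y\<in>supp g. supp (M x y))" by (rule supp_lext)
qed

lemma bext_lext_left:
  assumes "fin f" "\<And>p. p \<in> supp f \<Longrightarrow> fin (J p)"
  shows "bext M (lext J f) g = lext (\<lambda>p. bext M (J p) g) f"
  unfolding bext_lext using assms by (rule lext_comp)

lemma bext_lext_right:
  assumes "fin g" "\<And>q. q \<in> supp g \<Longrightarrow> fin (J q)"
  shows "bext M f (lext J g) = lext (\<lambda>q. bext M f (J q)) g"
proof -
  have "bext M f (lext J g) = lext (\<lambda>x. lext (\<lambda>q. lext (M x) (J q)) g) f"
    unfolding bext_lext by (rule lext_cong) (rule lext_comp[OF assms])
  also have "\<dots> = lext (\<lambda>q. lext (\<lambda>x. lext (M x) (J q)) f) g"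
    by (rule lext_swap[symmetric])
  finally show ?thesis by (simp add: bext_lext)
qed

lemma elt_fin: "elt V f \<Longrightarrow> fin f" by (simp add: elt_def fin_def)

lemma fin_lext_V: "fin g \<Longrightarrow> supp g \<subseteq> V \<Longrightarrow> (\<And>y. y \<in> V \<Longrightarrow> fin (K y)) \<Longrightarrow> fin (lext K g)"
  by (rule fin_lext) auto

lemma comm_on_bext:
  assumes "\<And>x y. x \<in> V \<Longrightarrow> y \<in> V \<Longrightarrow> M x y = M y x"
  shows "comm_on V (bext M)"
  unfolding comm_on_def elt_def using assms by (intro allI impI bext_comm) blast

lemma assoc_on_bext:
  assumes fM: "\<And>x y. x \<in> V \<Longrightarrow> y \<in> V \<Longrightarrow> fin (M x y)"
    and aM: "\<And>x y z. x \<in> V \<Longrightarrow> y \<in> V \<Longrightarrow> z \<in> V \<Longrightarrow>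
                lext (\<lambda>p. M p z) (M x y) = lext (M x) (M y z)"
  shows "assoc_on V (bext M)"
  unfolding assoc_on_def
proof (intro allI impI)
  fix f g h assume "elt V f \<and> elt V g \<and> elt V h"
  hence f: "fin f" and g: "fin g" and h: "fin h" and sf: "supp f \<subseteq> V" and sg: "supp g \<subseteq> V"
    and sh: "supp h \<subseteq> V"
    by (auto simp: elt_def fin_def)
  have "bext M (bext M f g) h = lext (\<lambda>p. lext (M p) h) (lext (\<lambda>x. lext (M x) g) f)"
    by (simp add: bext_lext)
  also have "\<dots> = lext (\<lambda>x. lext (\<lambda>p. lext (M p) h) (lext (M x) g)) f"
    by (rule lext_comp[OF f], rule fin_lext_V[OF g sg]) (use sf fM in blast)
  also have "\<dots> = lext (\<lambda>x. lext (\<lambda>y. lext (\<lambda>z. lext (\<lambda>p. M p z) (M x y)) h) g) f"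
  proof (rule lext_cong)
    fix x assume x: "x \<in> supp f"
    have "lext (\<lambda>p. lext (M p) h) (lext (M x) g) = lext (\<lambda>y. lext (\<lambda>p. lext (M p) h) (M x y)) g"
      by (rule lext_comp[OF g]) (use x sf sg fM in auto)
    also have "\<dots> = lext (\<lambda>y. lext (\<lambda>z. lext (\<lambda>p. M p z) (M x y)) h) g"
      by (rule lext_cong) (rule lext_swap[symmetric])
    finally show "lext (\<lambda>p. lext (M p) h) (lext (M x) g) = lext (\<lambda>y. lext (\<lambda>z. lext (\<lambda>p. M p z) (M x y)) h) g" .
  qed
  also have "\<dots> = lext (\<lambda>x. lext (\<lambda>y. lext (\<lambda>z. lext (M x) (M y z)) h) g) f"
    by (intro lext_cong) (metis aM sf sg sh subsetD)
  also have "\<dots> = lext (\<lambda>x. lext (M x) (lext (\<lambda>y. lext (M y) h) g)) f"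
  proof (rule lext_cong)
    fix x assume x: "x \<in> supp f"
    have "lext (M x) (lext (\<lambda>y. lext (M y) h) g) = lext (\<lambda>y. lext (M x) (lext (M y) h)) g"
      by (rule lext_comp[OF g], rule fin_lext_V[OF h sh]) (use sg fM in blast)
    also have "\<dots> = lext (\<lambda>y. lext (\<lambda>z. lext (M x) (M y z)) h) g"
      by (rule lext_cong, rule lext_comp[OF h]) (use sg sh fM in auto)
    finally show "lext (\<lambda>y. lext (\<lambda>z. lext (M x) (M y z)) h) g = lext (M x) (lext (\<lambda>y. lext (M y) h) g)" by simp
  qed
  also have "\<dots> = bext M f (bext M g h)" by (simp add: bext_lext)
  finally show "bext M (bext M f g) h = bext M f (bext M g h)" .
qed

lemma hom_bext:
  assumes f: "fin f" and g: "fin g" and sf: "supp f \<subseteq> V" and sg: "supp g \<subseteq> V"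
    and fM: "\<And>x y. x \<in> V \<Longrightarrow> y \<in> V \<Longrightarrow> fin (M x y)"
    and fK: "\<And>x. x \<in> V \<Longrightarrow> fin (K x)"
    and hom: "\<And>x y. x \<in> V \<Longrightarrow> y \<in> V \<Longrightarrow> lext K (M x y) = bext M' (K x) (K y)"
  shows "lext K (bext M f g) = bext M' (lext K f) (lext K g)"
proof -
  have "lext K (bext M f g) = lext (\<lambda>p. lext K (lext (M p) g)) f"
    unfolding bext_lext by (rule lext_comp[OF f], rule fin_lext_V[OF g sg]) (use sf fM in blast)
  also have "\<dots> = lext (\<lambda>p. lext (\<lambda>q. bext M' (K p) (K q)) g) f"
  proof (rule lext_cong)
    fix p assume p: "p \<in> supp f"
    have "lext K (lext (M p) g) = lext (\<lambda>q. lext K (M p q)) g"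
      by (rule lext_comp[OF g]) (use p sf sg fM in auto)
    also have "\<dots> = lext (\<lambda>q. bext M' (K p) (K q)) g"
      by (rule lext_cong) (use p sf sg hom in auto)
    finally show "lext K (lext (M p) g) = lext (\<lambda>q. bext M' (K p) (K q)) g" .
  qed
  also have "\<dots> = lext (\<lambda>p. bext M' (K p) (lext K g)) f"
    by (rule lext_cong, rule bext_lext_right[symmetric, OF g]) (use sg fK in auto)
  also have "\<dots> = bext M' (lext K f) (lext K g)"
    by (rule bext_lext_left[symmetric, OF f]) (use sf fK in auto)
  finally show ?thesis .
qed

lemma assoc_on_hom:
  assumes fM: "\<And>x y. x \<in> V \<Longrightarrow> y \<in> V \<Longrightarrow> fin (M x y)"
    and sM: "\<And>x y. x \<in> V \<Longrightarrow> y \<in> V \<Longrightarrow> supp (M x y) \<subseteq> V"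
    and fK: "\<And>x. x \<in> V \<Longrightarrow> fin (K x)"
    and fM': "\<And>x y. fin (M' x y)"
    and hom: "\<And>x y. x \<in> V \<Longrightarrow> y \<in> V \<Longrightarrow> lext K (M x y) = bext M' (K x) (K y)"
    and A': "assoc_on UNIV (bext M')"
    and inj: "\<And>F. fin F \<Longrightarrow> supp F \<subseteq> V \<Longrightarrow> lext K F = 0 \<Longrightarrow> F = 0"
  shows "assoc_on V (bext M)"
proof (rule assoc_on_bext[OF fM])
  fix x y z assume x: "x \<in> V" and y: "y \<in> V" and z: "z \<in> V"
  let ?A = "bext M (M x y) (delta z)" and ?B = "bext M (delta x) (M y z)"
  have sxy: "supp (M x y) \<subseteq> V" and syz: "supp (M y z) \<subseteq> V" using sM x y z by auto
  have finA: "fin ?A" by (rule fin_bext) (use fM x y z sxy in \<open>auto simp: subset_iff\<close>)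
  have finB: "fin ?B" by (rule fin_bext) (use fM x y z syz in \<open>auto simp: subset_iff\<close>)
  have sA: "supp ?A \<subseteq> V"
  proof -
    have "(\<Union>p\<in>supp (M x y). \<Union>q\<in>supp (delta z). supp (M p q)) \<subseteq> V"
    proof (intro UN_least)
      fix p q assume "p \<in> supp (M x y)" "q \<in> supp (delta z)"
      hence "p \<in> V" "q \<in> V" using sxy z by auto
      thus "supp (M p q) \<subseteq> V" by (rule sM)
    qed
    thus ?thesis using supp_bext[of M "M x y" "delta z"] by blast
  qed
  have sB: "supp ?B \<subseteq> V"
  proof -
    have "(\<Union>p\<in>supp (delta x). \<Union>q\<in>supp (M y z). supp (M p q)) \<subseteq> V"
    proof (intro UN_least)
      fix p q assume "p \<in> supp (delta x)" "q \<in> supp (M y z)"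
      hence "p \<in> V" "q \<in> V" using syz x by auto
      thus "supp (M p q) \<subseteq> V" by (rule sM)
    qed
    thus ?thesis using supp_bext[of M "delta x" "M y z"] by blast
  qed
  have finK: "fin (bext M' f g)" if "fin f" "fin g" for f g using that fM' by (intro fin_bext) auto
  have "lext K ?A = bext M' (lext K (M x y)) (lext K (delta z))"
    by (rule hom_bext[OF _ _ _ _ fM fK hom]) (use fM x y z sxy in auto)
  hence eA: "lext K ?A = bext M' (bext M' (K x) (K y)) (K z)"
    by (simp only: hom[OF x y] lext_delta)
  have "lext K ?B = bext M' (lext K (delta x)) (lext K (M y z))"
    by (rule hom_bext[OF _ _ _ _ fM fK hom]) (use fM x y z syz in auto)
  hence eB: "lext K ?B = bext M' (K x) (bext M' (K y) (K z))"
    by (simp only: hom[OF y z] lext_delta)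
  have "elt UNIV (K x)" "elt UNIV (K y)" "elt UNIV (K z)" using fK x y z by (auto simp: elt_def fin_def)
  hence "lext K ?A = lext K ?B" unfolding eA eB using A' unfolding assoc_on_def by blast
  hence "lext K (?A - ?B) = 0" by (simp add: lext_diff finA finB)
  moreover have "fin (?A - ?B)" using finA finB by simp
  moreover have "supp (?A - ?B) \<subseteq> V" using sA sB supp_diff[of ?A ?B] by blast
  ultimately have "?A - ?B = 0" using inj by blast
  hence "?A = ?B" by (rule right_minus_eq[THEN iffD1])
  thus "lext (\<lambda>p. M p z) (M x y) = lext (M x) (M y z)" by (simp only: bext_right_delta bext_left_delta)
qed



definition Bop :: "('a \<Rightarrow> rat) \<Rightarrow> ('a list \<Rightarrow> rat) \<Rightarrow> 'a list \<Rightarrow> rat" where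
  "Bop \<alpha> Y = lext (\<lambda>c. pre c Y) \<alpha>"

definition Rm :: "('w \<Rightarrow> 'w \<Rightarrow> 'w \<Rightarrow> rat) \<Rightarrow> 'w \<Rightarrow> ('w \<Rightarrow> rat) \<Rightarrow> 'w \<Rightarrow> rat" where
  "Rm M w F = lext (\<lambda>x. M x w) F"

lemma Bop_lext: "Bop \<alpha> (lext K f) = lext (\<lambda>x. Bop \<alpha> (K x)) f"
  unfolding Bop_def pre_lext by (rule lext_swap)

lemma Bop_add[simp]: "Bop \<alpha> (Y1 + Y2) = Bop \<alpha> Y1 + Bop \<alpha> Y2"
  unfolding Bop_def by (simp add: lext_kadd)

lemma Bop_delta_left[simp]: "Bop (delta c) Y = pre c Y"
  by (simp add: Bop_def)

lemma Bop_delta_right: "Bop \<alpha> (delta x) = lext (\<lambda>d. delta (d # x)) \<alpha>"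
  by (simp add: Bop_def)

lemma fin_Bop[simp]: "fin \<alpha> \<Longrightarrow> fin Y \<Longrightarrow> fin (Bop \<alpha> Y)"
  unfolding Bop_def by (rule fin_lext) auto

lemma Bop_lext_left:
  "fin \<alpha> \<Longrightarrow> (\<And>d. fin (K d)) \<Longrightarrow> Bop (lext K \<alpha>) Y = lext (\<lambda>d. Bop (K d) Y) \<alpha>"
  unfolding Bop_def by (rule lext_comp) auto

lemma Bop_as_lext: "fin \<alpha> \<Longrightarrow> fin X \<Longrightarrow> Bop \<alpha> X = lext (\<lambda>x. lext (\<lambda>d. delta (d # x)) \<alpha>) X"
proof -
  assume X: "fin X"
  have "Bop \<alpha> X = Bop \<alpha> (lext delta X)" using lext_id[OF X] by simp
  also have "\<dots> = lext (\<lambda>x. lext (\<lambda>d. delta (d # x)) \<alpha>) X"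
    by (simp add: Bop_lext Bop_delta_right)
  finally show ?thesis .
qed

lemma Rm_delta[simp]: "Rm M w (delta x) = M x w" by (simp add: Rm_def)
lemma Rm_add: "fin A \<Longrightarrow> fin B \<Longrightarrow> Rm M w (A + B) = Rm M w A + Rm M w B"
  by (simp add: Rm_def lext_add)
lemma Rm_lext: "fin f \<Longrightarrow> (\<And>x. fin (K x)) \<Longrightarrow> Rm M w (lext K f) = lext (\<lambda>x. Rm M w (K x)) f"
  unfolding Rm_def by (rule lext_comp) auto

lemma pair_induct:
  assumes "\<And>v. P [] v" "\<And>a u. P (a # u) []"
    "\<And>a u b v. P u (b # v) \<Longrightarrow> P (a # u) v \<Longrightarrow> P u v \<Longrightarrow> P (a # u) (b # v)"
  shows "P u v"
proof (induction u arbitrary: v)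
  case Nil show ?case by (rule assms(1))
next
  case (Cons a u)
  note IHu = Cons.IH
  show ?case
  proof (induction v)
    case Nil show ?case by (rule assms(2))
  next
    case (Cons b v) thus ?case using assms(3) IHu by blast
  qed
qed

declare stuffle.simps(3)[simp del]

locale stf =
  fixes br :: "'a \<Rightarrow> 'a \<Rightarrow> 'a \<Rightarrow> rat" and L :: "'a set"
  assumes br_comm: "br a b = br b a"
    and br_fin: "fin (br a b)"
    and br_assoc: "a \<in> L \<Longrightarrow> b \<in> L \<Longrightarrow> c \<in> L \<Longrightarrow>
        lext (\<lambda>d. br d c) (br a b) = lext (\<lambda>d. br a d) (br b c)"
begin

abbreviation S where "S \<equiv> stuffle br"
abbreviation R where "R \<equiv> Rm S"

lemma S_nil_left[simp]: "S [] v = delta v" by simp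
lemma S_nil_right[simp]: "S u [] = delta u" by (cases u) auto
lemma S_cons: "S (a # u) (b # v) = pre a (S u (b # v)) + pre b (S (a # u) v) + Bop (br a b) (S u v)"
  by (simp add: Bop_def Let_def stuffle.simps(3))

lemma fin_S[simp]: "fin (S u v)"
proof (induction u v rule: pair_induct)
  case (3 a u b v)
  thus ?case by (simp only: S_cons) (intro fin_add fin_pre fin_Bop br_fin)
qed auto

lemma S_comm: "S u v = S v u"
proof (induction u v rule: pair_induct)
  case (3 a u b v)
  thus ?case by (simp only: S_cons br_comm[of a b] add_ac)
qed auto

lemma R_nil: "fin F \<Longrightarrow> R [] F = F"
  unfolding Rm_def by (simp add: lext_id)

lemma E1:
  assumes X: "fin X"
  shows "R (c # w) (pre a X) = pre a (R (c # w) X) + pre c (R w (pre a X)) + Bop (br a c) (R w X)"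
proof -
  have l: "R (c # w) (pre a X) = lext (\<lambda>x. S (a # x) (c # w)) X"
    by (simp add: pre_as_lext[OF X] Rm_lext[OF X])
  have m: "R w (pre a X) = lext (\<lambda>x. S (a # x) w) X"
    by (simp add: pre_as_lext[OF X] Rm_lext[OF X])
  have r1: "pre a (R (c # w) X) = lext (\<lambda>x. pre a (S x (c # w))) X"
    by (simp add: Rm_def pre_lext)
  have r3: "Bop (br a c) (R w X) = lext (\<lambda>x. Bop (br a c) (S x w)) X"
    by (simp add: Rm_def Bop_lext)
  have "pre a (R (c # w) X) + pre c (R w (pre a X)) + Bop (br a c) (R w X)
      = lext (\<lambda>x. pre a (S x (c # w)) + pre c (S (a # x) w) + Bop (br a c) (S x w)) X"
    unfolding r1 m r3 pre_lext lext_kadd ..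
  also have "\<dots> = R (c # w) (pre a X)" unfolding l by (rule lext_cong) (simp only: S_cons)
  finally show ?thesis by (rule sym)
qed

lemma RB: "fin \<alpha> \<Longrightarrow> fin X \<Longrightarrow> R w (Bop \<alpha> X) = lext (\<lambda>x. lext (\<lambda>d. S (d # x) w) \<alpha>) X"
proof -
  assume a: "fin \<alpha>" and X: "fin X"
  have "R w (Bop \<alpha> X) = lext (\<lambda>x. R w (lext (\<lambda>d. delta (d # x)) \<alpha>)) X"
    unfolding Bop_as_lext[OF a X] by (rule Rm_lext[OF X]) (intro fin_lext a, simp)
  also have "\<dots> = lext (\<lambda>x. lext (\<lambda>d. S (d # x) w) \<alpha>) X"
    by (rule lext_cong) (simp add: Rm_lext[OF a])
  finally show ?thesis .
qed

lemma E2: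
  assumes a: "fin \<alpha>" and X: "fin X"
  shows "R (c # w) (Bop \<alpha> X) = Bop \<alpha> (R (c # w) X) + pre c (R w (Bop \<alpha> X))
           + Bop (lext (\<lambda>d. br d c) \<alpha>) (R w X)"
proof -
  have r1: "Bop \<alpha> (R (c # w) X) = lext (\<lambda>x. lext (\<lambda>d. pre d (S x (c # w))) \<alpha>) X"
    unfolding Rm_def Bop_lext by (simp only: Bop_def)
  have r2: "pre c (R w (Bop \<alpha> X)) = lext (\<lambda>x. lext (\<lambda>d. pre c (S (d # x) w)) \<alpha>) X"
    by (simp add: RB[OF a X] pre_lext)
  have r3: "Bop (lext (\<lambda>d. br d c) \<alpha>) (R w X) = lext (\<lambda>x. lext (\<lambda>d. Bop (br d c) (S x w)) \<alpha>) X"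
    by (simp add: Rm_def Bop_lext Bop_lext_left[OF a] br_fin)
  have "Bop \<alpha> (R (c # w) X) + pre c (R w (Bop \<alpha> X)) + Bop (lext (\<lambda>d. br d c) \<alpha>) (R w X)
     = lext (\<lambda>x. lext (\<lambda>d. pre d (S x (c # w)) + pre c (S (d # x) w) + Bop (br d c) (S x w)) \<alpha>) X"
    unfolding r1 r2 r3 lext_kadd ..
  also have "\<dots> = R (c # w) (Bop \<alpha> X)"
    unfolding RB[OF a X] by (intro lext_cong) (simp only: S_cons)
  finally show ?thesis by (rule sym)
qed

lemma Lexp:
  "R (c # w) (S (a # u) (b # v)) =
     pre a (R (c # w) (S u (b # v))) + Bop (br a c) (R w (S u (b # v)))
   + pre b (R (c # w) (S (a # u) v)) + Bop (br b c) (R w (S (a # u) v))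
   + Bop (br a b) (R (c # w) (S u v)) + Bop (lext (\<lambda>d. br d c) (br a b)) (R w (S u v))
   + pre c (R w (S (a # u) (b # v)))"
proof -
  have h1: "R (c # w) (S (a # u) (b # v)) = R (c # w) (pre a (S u (b # v))) + R (c # w) (pre b (S (a # u) v))
      + R (c # w) (Bop (br a b) (S u v))"
    by (simp only: S_cons) (simp add: Rm_add br_fin)
  have h2: "R w (S (a # u) (b # v)) = R w (pre a (S u (b # v))) + R w (pre b (S (a # u) v))
      + R w (Bop (br a b) (S u v))"
    by (simp only: S_cons) (simp add: Rm_add br_fin)
  show ?thesis
    unfolding h1 h2 E1[of "S u (b # v)" c w a, OF fin_S] E1[of "S (a # u) v" c w b, OF fin_S]
      E2[of "br a b" "S u v" c w, OF br_fin fin_S]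
    by (simp add: add_ac)
qed

lemma assoc_words:
  "set x \<subseteq> L \<Longrightarrow> set y \<subseteq> L \<Longrightarrow> set z \<subseteq> L \<Longrightarrow> R z (S x y) = R x (S y z)"
proof (induction "length x + length y + length z" arbitrary: x y z rule: less_induct)
  case less
  show ?case
  proof (cases "x = [] \<or> y = [] \<or> z = []")
    case True
    thus ?thesis by (auto simp: R_nil S_comm)
  next
    case False
    then obtain a u b v c w where x: "x = a # u" and y: "y = b # v" and z: "z = c # w"
      by (auto simp: neq_Nil_conv)
    have L: "a \<in> L" "b \<in> L" "c \<in> L" "set u \<subseteq> L" "set v \<subseteq> L" "set w \<subseteq> L"
      using less.prems x y z by auto
    note IH = less.hyps[unfolded x y z]
    have e1: "R (c # w) (S u (b # v)) = R u (S (b # v) (c # w))" by (rule IH) (use L in auto)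
    have e2: "R w (S u (b # v)) = R u (S (b # v) w)" by (rule IH) (use L in auto)
    have e3: "R (c # w) (S (a # u) v) = R (a # u) (S v (c # w))" by (rule IH) (use L in auto)
    have e4: "R w (S (a # u) v) = R (a # u) (S v w)" by (rule IH) (use L in auto)
    have e5: "R (c # w) (S u v) = R u (S v (c # w))" by (rule IH) (use L in auto)
    have e6: "R w (S u v) = R u (S v w)" by (rule IH) (use L in auto)
    have e7: "R w (S (a # u) (b # v)) = R (a # u) (S (b # v) w)" by (rule IH) (use L in auto)
    have c1: "br c a = br a c" and c2: "br b a = br a b" by (rule br_comm)+
    have c3: "lext (\<lambda>d. br d a) (br b c) = lext (\<lambda>d. br d c) (br a b)"
    proof -
      have "lext (\<lambda>d. br d a) (br b c) = lext (\<lambda>d. br a d) (br b c)" by (simp add: br_comm)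
      also have "\<dots> = lext (\<lambda>d. br d c) (br a b)" by (rule br_assoc[symmetric]) (use L in auto)
      finally show ?thesis .
    qed
    show ?thesis
      unfolding x y z Lexp[of c w a u b v] Lexp[of a u b v c w] e1 e2 e3 e4 e5 e6 e7 c1 c2 c3
      by (simp add: add_ac)
  qed
qed

lemma stf_comm: "comm_on V (bext S)"
  by (rule comm_on_bext) (rule S_comm)

lemma stf_assoc: "assoc_on {w. set w \<subseteq> L} (bext S)"
proof (rule assoc_on_bext)
  fix x y z assume "x \<in> {w. set w \<subseteq> L}" "y \<in> {w. set w \<subseteq> L}" "z \<in> {w. set w \<subseteq> L}"
  hence "R z (S x y) = R x (S y z)" by (intro assoc_words) auto
  moreover have "lext (S x) (S y z) = lext (\<lambda>p. S p x) (S y z)" by (rule lext_cong) (rule S_comm)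
  ultimately show "lext (\<lambda>p. S p z) (S x y) = lext (S x) (S y z)" by (simp add: Rm_def)
qed simp

end


interpretation II: stf brII UNIV
  by unfold_locales (auto simp: brII_def add_ac)

interpretation BB: stf brB UNIV
  by unfold_locales (auto simp: brB_def add_ac)

definition LI :: "letI set" where "LI = {Th} \<union> range (\<lambda>k. Zl (Suc k))"

lemma brI_comm: "brI a b = brI b a"
  by (cases a; cases b) (auto simp: add.commute)

lemma brI_fin: "fin (brI a b)"
  by (cases a; cases b) auto

interpretation I: stf brI LI
proof (unfold_locales, rule brI_comm, rule brI_fin)
  fix a b c assume "a \<in> LI" "b \<in> LI" "c \<in> LI"
  thus "lext (\<lambda>d. brI d c) (brI a b) = lext (\<lambda>d. brI a d) (brI b c)"
    unfolding LI_def
    by (auto simp: lext_add lext_diff algebra_simps)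
qed

lemma WI_eq: "WI = {w. set w \<subseteq> LI}"
  unfolding WI_def LI_def by (auto simp: Suc_le_eq gr0_conv_Suc)

lemma typeI: "comm_on WI mulI \<and> assoc_on WI mulI"
  unfolding mulI_def WI_eq using I.stf_comm I.stf_assoc by blast

lemma typeII: "comm_on UNIV mulII \<and> assoc_on UNIV mulII"
  unfolding mulII_def using II.stf_comm II.stf_assoc by simp



definition K3 :: "int \<times> int list \<Rightarrow> int list \<Rightarrow> rat" where
  "K3 x = sigma_minus (fst x) (snd x)"

lemma pz_lext: "pz k (lext K f) = lext (\<lambda>x. pz k (K x)) f"
  by (auto simp: pz_def lext_def fun_eq_iff)
lemma pz_delta[simp]: "pz k (delta w) = delta (k, w)"
  by (auto simp: pz_def delta_def fun_eq_iff)
lemma pz_add[simp]: "pz k (F + G) = pz k F + pz k G"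
  by (auto simp: pz_def fun_eq_iff)
lemma pz_diff[simp]: "pz k (F - G) = pz k F - pz k G"
  by (auto simp: pz_def fun_eq_iff)
lemma pz_as_lext: "fin F \<Longrightarrow> pz k F = lext (\<lambda>w. delta (k, w)) F"
  using pz_lext[of k delta F] by (simp add: lext_id)
lemma fin_pz[simp]: "fin F \<Longrightarrow> fin (pz k F)"
  by (simp add: pz_as_lext fin_lext)

lemma fin_K3[simp]: "fin (K3 x)" by (simp add: K3_def sigma_minus_def)

lemma K3_pz: "fin F \<Longrightarrow> lext K3 (pz k F) = pre k F - pre (k - 1) F"
proof -
  assume F: "fin F"
  have "lext K3 (pz k F) = lext (\<lambda>w. K3 (k, w)) F"
    by (simp add: pz_as_lext[OF F] lext_comp[OF F])
  also have "\<dots> = lext (\<lambda>w. delta (k # w) - delta ((k - 1) # w)) F"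
    by (simp add: K3_def sigma_minus_def)
  also have "\<dots> = pre k F - pre (k - 1) F"
    by (simp add: lext_kdiff pre_as_lext[OF F])
  finally show ?thesis .
qed

lemma fin_bB[simp]: "fin f \<Longrightarrow> fin g \<Longrightarrow> fin (bext stB f g)"
  by (rule fin_bext) auto

lemma hom3: "lext K3 (mIII x y) = bext stB (K3 x) (K3 y)"
proof -
  obtain k u where x: "x = (k, u)" by fastforce
  obtain l v where y: "y = (l, v)" by fastforce
  have i1: "k + (l - 1) = k + l - 1" "k - 1 + l = k + l - 1" "k - 1 + (l - 1) = k + l - 1 - 1"
    by simp_all
  show ?thesis
    unfolding x y
    apply (simp add: lext_add lext_diff K3_pz bext_diff_left bext_diff_right sigma_minus_def K3_def
        BB.S_cons brB_def i1)
    apply (simp add: fun_eq_iff algebra_simps)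
    done
qed

lemma lext_delta_inj:
  assumes F: "fin F" and g: "inj g"
  shows "lext (\<lambda>x. delta (g x)) F (g x0) = F x0"
proof -
  have fA: "finite (insert x0 (supp F))" using F by (simp add: fin_def)
  have "lext (\<lambda>x. delta (g x)) F (g x0) = (\<Sum>x\<in>insert x0 (supp F). F x * delta (g x) (g x0))"
    by (rule lext_superset[OF fA]) auto
  also have "\<dots> = (\<Sum>x\<in>insert x0 (supp F). if x = x0 then F x else 0)"
    by (rule sum.cong) (auto simp: delta_def inj_eq[OF g])
  also have "\<dots> = F x0" using fA by (simp add: sum.delta')
  finally show ?thesis .
qed

lemma inj3:
  assumes F: "fin F" and z: "lext K3 F = 0"
  shows "F = 0"
proof -
  let ?g1 = "\<lambda>x::int \<times> int list. fst x # snd x"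
  let ?g2 = "\<lambda>x::int \<times> int list. (fst x - 1) # snd x"
  have i1: "inj ?g1" by (auto simp: inj_def prod_eq_iff)
  have i2: "inj ?g2" by (auto simp: inj_def prod_eq_iff)
  have K3eq: "K3 = (\<lambda>x. delta (?g1 x) - delta (?g2 x))"
    by (simp add: fun_eq_iff K3_def sigma_minus_def)
  have "lext K3 F = lext (\<lambda>x. delta (?g1 x)) F - lext (\<lambda>x. delta (?g2 x)) F"
    unfolding K3eq by (rule lext_kdiff)
  hence eq: "F (n, w) = F (n + 1, w)" for n w
  proof -
    assume e: "lext K3 F = lext (\<lambda>x. delta (?g1 x)) F - lext (\<lambda>x. delta (?g2 x)) F"
    have "0 = lext K3 F (n # w)" using z by simp
    also have "\<dots> = lext (\<lambda>x. delta (?g1 x)) F (?g1 (n, w)) - lext (\<lambda>x. delta (?g2 x)) F (?g2 (n + 1, w))"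
      unfolding e by simp
    also have "\<dots> = F (n, w) - F (n + 1, w)"
      by (simp only: lext_delta_inj[OF F i1] lext_delta_inj[OF F i2])
    finally show ?thesis by simp
  qed
  show "F = 0"
  proof (rule ext, rule ccontr)
    fix p assume ne: "F p \<noteq> (0 :: _ \<Rightarrow> rat) p"
    obtain n w where p: "p = (n, w)" by fastforce
    have "F (n + int m, w) = F (n, w)" for m
      by (induction m) (simp, metis eq add.assoc of_nat_Suc add.commute)
    hence "range (\<lambda>m::nat. (n + int m, w)) \<subseteq> supp F" using ne p by (auto simp: supp_def)
    moreover have "infinite (range (\<lambda>m::nat. (n + int m, w)))"
    proof
      assume "finite (range (\<lambda>m::nat. (n + int m, w)))"
      hence "finite (UNIV :: nat set)" by (rule finite_imageD) (auto simp: inj_on_def)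
      thus False by simp
    qed
    ultimately show False using F by (auto simp: fin_def dest: finite_subset)
  qed
qed

lemma typeIII: "comm_on UNIV mulIII \<and> assoc_on UNIV mulIII"
proof
  show "comm_on UNIV mulIII"
    unfolding mulIII_def
  proof (rule comm_on_bext)
    fix x y :: "int \<times> int list"
    obtain k u where x: "x = (k, u)" by fastforce
    obtain l v where y: "y = (l, v)" by fastforce
    have c: "bext stB f g = bext stB g f" for f g by (rule bext_comm) (rule BB.S_comm)
    show "mIII x y = mIII y x" unfolding x y by (simp add: c add_ac BB.S_comm[of u v])
  qed
  show "assoc_on UNIV mulIII"
    unfolding mulIII_def
    by (rule assoc_on_hom[where K = K3 and M' = stB])
      (auto simp: hom3 BB.stf_assoc[simplified] sigma_minus_def intro: inj3)
qed



fun K4 :: "bIV \<Rightarrow> nat list \<Rightarrow> rat" where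
  "K4 One = delta []"
| "K4 (ThW w) = delta (1 # w)"
| "K4 (ZW k w) = sigma_plus k w"

lemma pZ_lext: "pZ k (lext K f) = lext (\<lambda>x. pZ k (K x)) f"
  by (auto simp: pZ_def lext_def fun_eq_iff split: bIV.split)
lemma pZ_delta[simp]: "pZ k (delta w) = delta (ZW k w)"
  by (auto simp: pZ_def delta_def fun_eq_iff split: bIV.split)
lemma pZ_add[simp]: "pZ k (F + G) = pZ k F + pZ k G"
  by (auto simp: pZ_def fun_eq_iff split: bIV.split)
lemma pZ_diff[simp]: "pZ k (F - G) = pZ k F - pZ k G"
  by (auto simp: pZ_def fun_eq_iff split: bIV.split)
lemma pZ_as_lext: "fin F \<Longrightarrow> pZ k F = lext (\<lambda>w. delta (ZW k w)) F"
  using pZ_lext[of k delta F] by (simp add: lext_id)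
lemma fin_pZ[simp]: "fin F \<Longrightarrow> fin (pZ k F)"
  by (simp add: pZ_as_lext fin_lext)

lemma pT_lext: "pT (lext K f) = lext (\<lambda>x. pT (K x)) f"
  by (auto simp: pT_def lext_def fun_eq_iff split: bIV.split)
lemma pT_delta[simp]: "pT (delta w) = delta (ThW w)"
  by (auto simp: pT_def delta_def fun_eq_iff split: bIV.split)
lemma pT_add[simp]: "pT (F + G) = pT F + pT G"
  by (auto simp: pT_def fun_eq_iff split: bIV.split)
lemma pT_diff[simp]: "pT (F - G) = pT F - pT G"
  by (auto simp: pT_def fun_eq_iff split: bIV.split)
lemma pT_as_lext: "fin F \<Longrightarrow> pT F = lext (\<lambda>w. delta (ThW w)) F"
  using pT_lext[of delta F] by (simp add: lext_id)
lemma fin_pT[simp]: "fin F \<Longrightarrow> fin (pT F)"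
  by (simp add: pT_as_lext fin_lext)

lemma supp_pZ: "supp (pZ k F) \<subseteq> {ZW k w | w. True}"
proof
  fix x assume "x \<in> supp (pZ k F)"
  thus "x \<in> {ZW k w | w. True}" by (cases x) (auto simp: supp_def pZ_def split: if_splits)
qed
lemma supp_pT: "supp (pT F) \<subseteq> range ThW"
proof
  fix x assume "x \<in> supp (pT F)"
  thus "x \<in> range ThW" by (cases x) (auto simp: supp_def pT_def)
qed

lemma fin_K4[simp]: "fin (K4 x)" by (cases x) (auto simp: sigma_plus_def)

lemma K4_pZ: "fin F \<Longrightarrow> lext K4 (pZ k F) = pre k F + pre (k - 1) F"
proof -
  assume F: "fin F"
  have "lext K4 (pZ k F) = lext (\<lambda>w. K4 (ZW k w)) F"
    by (simp add: pZ_as_lext[OF F] lext_comp[OF F])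
  also have "\<dots> = lext (\<lambda>w. delta (k # w) + delta ((k - 1) # w)) F"
    by (simp add: sigma_plus_def)
  also have "\<dots> = pre k F + pre (k - 1) F"
    by (simp add: lext_kadd pre_as_lext[OF F])
  finally show ?thesis .
qed

lemma K4_pT: "fin F \<Longrightarrow> lext K4 (pT F) = pre 1 F"
proof -
  assume F: "fin F"
  have "lext K4 (pT F) = lext (\<lambda>w. K4 (ThW w)) F"
    by (simp add: pT_as_lext[OF F] lext_comp[OF F])
  also have "\<dots> = pre 1 F"
    by (simp add: pre_as_lext[OF F])
  finally show ?thesis .
qed

lemma fin_bC[simp]: "fin f \<Longrightarrow> fin g \<Longrightarrow> fin (bext stC f g)"
  by (rule fin_bext) auto

lemma stuffle_nil_fun: "stuffle br [] = delta" by (rule ext) simp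

lemma hom4_ZT: "1 \<le> k \<Longrightarrow> lext K4 (mIV (ZW k u) (ThW v)) = bext stC (K4 (ZW k u)) (K4 (ThW v))"
proof -
  assume "1 \<le> k"
  then obtain k' where k: "k = Suc k'" by (cases k) auto
  show ?thesis
    unfolding k
    apply (simp add: lext_add K4_pZ K4_pT bext_add_left bext_add_right sigma_plus_def
        II.S_cons brII_def)
    apply (simp add: fun_eq_iff algebra_simps)
    done
qed

lemma hom4:
  assumes x: "x \<in> VIV" and y: "y \<in> VIV"
  shows "lext K4 (mIV x y) = bext stC (K4 x) (K4 y)"
proof -
  have c: "bext stC f g = bext stC g f" for f g by (rule bext_comm) (rule II.S_comm)
  show ?thesis
  proof (cases x)
    case One thus ?thesis by (simp add: bext_left_delta stuffle_nil_fun lext_id)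
  next
    case (ThW u) note xu = this
    show ?thesis
    proof (cases y)
      case One thus ?thesis using xu by (simp add: bext_right_delta lext_id)
    next
      case (ThW v)
      show ?thesis unfolding xu ThW
        apply (simp add: lext_add lext_diff K4_pZ K4_pT II.S_cons brII_def)
        apply (simp add: fun_eq_iff algebra_simps numeral_2_eq_2)
        done
    next
      case (ZW l v)
      hence l: "1 \<le> l" using y by (auto simp: VIV_def)
      have "mIV (ThW u) (ZW l v) = mIV (ZW l v) (ThW u)" by simp
      thus ?thesis unfolding xu ZW using hom4_ZT[OF l, of v u] c by simp
    qed
  next
    case (ZW k u) note xu = this
    hence k: "1 \<le> k" using x by (auto simp: VIV_def)
    then obtain k' where k': "k = Suc k'" by (cases k) auto
    show ?thesis
    proof (cases y)
      case One thus ?thesis using xu lext_id[OF fin_K4[of x]] by (simp add: bext_right_delta)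
    next
      case (ThW v)
      show ?thesis unfolding xu ThW by (rule hom4_ZT[OF k])
    next
      case (ZW l v)
      hence l: "1 \<le> l" using y by (auto simp: VIV_def)
      then obtain l' where l': "l = Suc l'" by (cases l) auto
      show ?thesis unfolding xu ZW k' l'
        apply (simp add: lext_add K4_pZ bext_add_left bext_add_right sigma_plus_def
            II.S_cons brII_def)
        apply (simp add: fun_eq_iff algebra_simps)
        done
    qed
  qed
qed

lemma fin_sigma_plus[simp]: "fin (sigma_plus k w)" by (simp add: sigma_plus_def)

lemma sub_add: "supp f \<subseteq> V \<Longrightarrow> supp g \<subseteq> V \<Longrightarrow> supp (f + g) \<subseteq> V"
  by (rule subset_trans[OF supp_add], rule Un_least)
lemma sub_diff: "supp f \<subseteq> V \<Longrightarrow> supp g \<subseteq> V \<Longrightarrow> supp (f - g) \<subseteq> V"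
  by (rule subset_trans[OF supp_diff], rule Un_least)
lemma VIV_pZ: "1 \<le> k \<Longrightarrow> supp (pZ k F) \<subseteq> VIV"
  using supp_pZ[of k F] by (auto simp: VIV_def)
lemma VIV_pT: "supp (pT F) \<subseteq> VIV"
  using supp_pT[of F] by (auto simp: VIV_def)

lemma mIV_VIV:
  assumes x: "x \<in> VIV" and y: "y \<in> VIV"
  shows "supp (mIV x y) \<subseteq> VIV"
proof (cases x)
  case One thus ?thesis using y by simp
next
  case (ThW u) note xu = this
  show ?thesis
  proof (cases y)
    case One thus ?thesis using x xu by simp
  next
    case (ThW v) show ?thesis unfolding xu ThW
      unfolding mIV.simps ladd_eq lsub_eq by (intro sub_add sub_diff VIV_pZ VIV_pT; simp)
  next
    case (ZW l v) hence l: "1 \<le> l" using y by (auto simp: VIV_def)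
    show ?thesis unfolding xu ZW
      unfolding mIV.simps ladd_eq lsub_eq by (intro sub_add sub_diff VIV_pZ VIV_pT; use l in simp)
  qed
next
  case (ZW k u) note xu = this
  hence k: "1 \<le> k" using x by (auto simp: VIV_def)
  show ?thesis
  proof (cases y)
    case One thus ?thesis using x xu by simp
  next
    case (ThW v) show ?thesis unfolding xu ThW
      unfolding mIV.simps ladd_eq lsub_eq by (intro sub_add sub_diff VIV_pZ VIV_pT; use k in simp)
  next
    case (ZW l v) hence l: "1 \<le> l" using y by (auto simp: VIV_def)
    show ?thesis unfolding xu ZW
      unfolding mIV.simps ladd_eq lsub_eq by (intro sub_add sub_diff VIV_pZ VIV_pT; use k l in simp)
  qed
qed

lemma fin_mIV: "fin (mIV x y)"
  by (cases x; cases y) (simp_all add: sigma_plus_def)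

lemma K4_nil: "K4 x [] = (if x = One then 1 else 0)"
  by (cases x) (auto simp: delta_def sigma_plus_def)

lemma eval4_nil: "fin F \<Longrightarrow> lext K4 F [] = F One"
proof -
  assume F: "fin F"
  have fA: "finite (insert One (supp F))" using F by (simp add: fin_def)
  have "lext K4 F [] = (\<Sum>x\<in>insert One (supp F). F x * K4 x [])"
    by (rule lext_superset[OF fA]) auto
  also have "\<dots> = (\<Sum>x\<in>insert One (supp F). if x = One then F x else 0)"
    by (rule sum.cong) (auto simp: K4_nil)
  also have "\<dots> = F One" using fA by (simp add: sum.delta')
  finally show ?thesis .
qed

lemma eval4_cons:
  assumes F: "fin F" and sF: "supp F \<subseteq> VIV"
  shows "lext K4 F (n # w) = (if n = 1 then F (ThW w) else 0) + F (ZW n w) + F (ZW (Suc n) w)"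
proof -
  let ?D = "{ThW w, ZW n w, ZW (Suc n) w}"
  let ?A = "supp F \<union> ?D"
  have fA: "finite ?A" using F by (simp add: fin_def)
  have "lext K4 F (n # w) = (\<Sum>x\<in>?A. F x * K4 x (n # w))"
    by (rule lext_superset[OF fA]) auto
  also have "\<dots> = (\<Sum>x\<in>?D. F x * K4 x (n # w))"
  proof (rule sum.mono_neutral_right[OF fA])
    show "?D \<subseteq> ?A" by blast
    show "\<forall>x\<in>?A - ?D. F x * K4 x (n # w) = 0"
    proof
      fix x assume xA: "x \<in> ?A - ?D"
      show "F x * K4 x (n # w) = 0"
      proof (cases "F x = 0")
        case False
        hence "x \<in> VIV" using sF by (auto simp: supp_def)
        hence "K4 x (n # w) = 0" using xA
          by (cases x) (auto simp: VIV_def delta_def sigma_plus_def)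
        thus ?thesis by simp
      qed simp
    qed
  qed
  also have "\<dots> = (if n = 1 then F (ThW w) else 0) + F (ZW n w) * (if n = 0 then 2 else 1) + F (ZW (Suc n) w)"
  proof -
    have nn: "(n - Suc 0 = n) = (n = 0)" by arith
    show ?thesis by (auto simp: delta_def sigma_plus_def nn)
  qed
  also have "\<dots> = (if n = 1 then F (ThW w) else 0) + F (ZW n w) + F (ZW (Suc n) w)"
  proof (cases "n = 0")
    case True
    have "ZW 0 w \<notin> VIV" by (auto simp: VIV_def)
    hence "F (ZW 0 w) = 0" using sF by (auto simp: supp_def)
    thus ?thesis using True by simp
  qed simp
  finally show ?thesis .
qed

lemma inj4:
  assumes F: "fin F" and sF: "supp F \<subseteq> VIV" and z: "lext K4 F = 0"
  shows "F = 0"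
proof -
  have ev: "(if n = 1 then F (ThW w) else 0) + F (ZW n w) + F (ZW (Suc n) w) = 0" for n w
    using eval4_cons[OF F sF, of n w] z by simp
  have z0: "F (ZW 0 w) = 0" for w
  proof -
    have "ZW 0 w \<notin> VIV" by (auto simp: VIV_def)
    thus ?thesis using sF by (auto simp: supp_def)
  qed
  have z1: "F (ZW 1 w) = 0" for w using ev[of 0 w] z0[of w] by simp
  have z2: "F (ZW (Suc (Suc m)) w) = 0" for m w
  proof (rule ccontr)
    assume ne: "F (ZW (Suc (Suc m)) w) \<noteq> 0"
    have alt: "F (ZW (Suc (Suc (m + j))) w) = (-1) ^ j * F (ZW (Suc (Suc m)) w)" for j
    proof (induction j)
      case (Suc j)
      have "F (ZW (Suc (Suc (m + j))) w) + F (ZW (Suc (Suc (Suc (m + j)))) w) = 0"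
        using ev[of "Suc (Suc (m + j))" w] by simp
      thus ?case using Suc.IH by simp
    qed simp
    have "range (\<lambda>j. ZW (Suc (Suc (m + j))) w) \<subseteq> supp F"
      using ne alt by (auto simp: supp_def)
    moreover have "infinite (range (\<lambda>j. ZW (Suc (Suc (m + j))) w))"
    proof
      assume "finite (range (\<lambda>j. ZW (Suc (Suc (m + j))) w))"
      hence "finite (UNIV :: nat set)" by (rule finite_imageD) (auto simp: inj_on_def)
      thus False by simp
    qed
    ultimately show False using F by (auto simp: fin_def dest: finite_subset)
  qed
  have zT: "F (ThW w) = 0" for w using ev[of 1 w] z1[of w] z2[of 0 w] by simp
  have zO: "F One = 0" using eval4_nil[OF F] z by simp
  show "F = 0"
  proof (rule ext)
    fix x show "F x = (0 :: _ \<Rightarrow> rat) x"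
    proof (cases x)
      case (ZW k w)
      have "k = 0 \<or> k = 1 \<or> (\<exists>m. k = Suc (Suc m))" by presburger
      thus ?thesis using z0 z1 z2 ZW by auto
    qed (use zT zO in auto)
  qed
qed

lemma typeIV: "comm_on VIV mulIV \<and> assoc_on VIV mulIV"
proof
  show "comm_on VIV mulIV"
    unfolding mulIV_def
  proof (rule comm_on_bext)
    fix x y assume "x \<in> VIV" "y \<in> VIV"
    have c: "bext stC f g = bext stC g f" for f g by (rule bext_comm) (rule II.S_comm)
    show "mIV x y = mIV y x"
    proof (cases x)
      case (ZW k u) note xu = this
      show ?thesis
      proof (cases y)
        case (ZW l v) show ?thesis unfolding xu ZW by (simp add: c add_ac II.S_comm[of u v])
      next
        case (ThW v) show ?thesis unfolding xu ThW by simp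
      qed (simp add: xu)
    next
      case (ThW u) note xu = this
      show ?thesis
      proof (cases y)
        case (ThW v) show ?thesis unfolding xu ThW
          by (simp add: add_ac II.S_comm[of u v] II.S_comm[of u "Suc 0 # v"] II.S_comm[of "Suc 0 # u" v])
      next
        case (ZW l v) show ?thesis unfolding xu ZW by simp
      qed (simp add: xu)
    next
      case One thus ?thesis by (cases y) simp_all
    qed
  qed
  show "assoc_on VIV mulIV"
    unfolding mulIV_def
    apply (rule assoc_on_hom[where K = K4 and M' = stC])
    apply (rule fin_mIV)
    apply (erule (1) mIV_VIV)
    apply (rule fin_K4)
    apply (rule II.fin_S)
    apply (erule (1) hom4)
    apply (use II.stf_assoc in simp)
    apply (erule (2) inj4)
    done
qed


theorem proposition4p6:
  shows "(comm_on WI mulI \<and> assoc_on WI mulI)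
       \<and> (comm_on UNIV mulII \<and> assoc_on UNIV mulII)
       \<and> (comm_on UNIV mulIII \<and> assoc_on UNIV mulIII)
       \<and> (comm_on VIV mulIV \<and> assoc_on VIV mulIV)"
  using typeI typeII typeIII typeIV by blast

end
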